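(* $\mathrm{CCC}=\mathrm{CCC}^{\perp\perp}$, where $\mathrm{CCC}$ is the class of ccc compact spaces.
   Context: For a class $\mathcal C$ of compact spaces, $\mathcal C^\perp$ is the class of compact spaces $K$ such that every continuous image of $K$ belonging to $\mathcal C$ is metrizable, and $\mathcal C^{\perp\perp}=(\mathcal C^\perp)^\perp$. A compact space is ccc if it has no uncountable family of pairwise disjoint nonempty open sets. *)

theory Defs
  imports "HOL-Analysis.Analysis"
begin

text \<open>Compact spaces are compact Hausdorff spaces.\<close>
definition compact_Hausdorff :: "'a topology \<Rightarrow> bool" where
  "compact_Hausdorff X \<longleftrightarrow> compact_space X \<and> Hausdorff_space X"

definition ccc_space :: "'a topology \<Rightarrow> bool" where
  "ccc_space X \<longleftrightarrow> (\<forall>\<U>. (\<forall>U\<in>\<U>. openin X U \<and> U \<noteq> {}) \<and> disjoint \<U> \<longrightarrow> countable \<U>)"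

definition CCC :: "'a topology \<Rightarrow> bool" where
  "CCC X \<longleftrightarrow> compact_Hausdorff X \<and> ccc_space X"

definition perp :: "('b topology \<Rightarrow> bool) \<Rightarrow> 'a topology \<Rightarrow> bool" where
  "perp C K \<longleftrightarrow> compact_Hausdorff K \<and>
     (\<forall>(L::'b topology) f. continuous_map K L f \<and> f ` topspace K = topspace L \<and> C L
        \<longrightarrow> metrizable_space L)"

text \<open>Continuous images of a compact Hausdorff space on type 'a are, up to homeomorphism,
  exactly quotient spaces whose points are fibres, i.e. spaces on type 'a set. Hence:\<close>
definition CCC_perp :: "'a topology \<Rightarrow> bool" where
  "CCC_perp K \<longleftrightarrow> perp (CCC :: 'a set topology \<Rightarrow> bool) K"

definition CCC_perp_perp :: "'a topology \<Rightarrow> bool" where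
  "CCC_perp_perp K \<longleftrightarrow> perp (CCC_perp :: 'a set topology \<Rightarrow> bool) K"

end

theory Submission
  imports Defs
begin


lemma transport_topology:
  fixes X :: "'x topology" and h :: "'x \<Rightarrow> 'y"
  assumes inj: "inj_on h (topspace X)"
  obtains Y :: "'y topology" where "homeomorphic_map X Y h"
proof -
  define g where "g = inv_into (topspace X) h"
  define Y where "Y = pullback_topology (h ` topspace X) g X"
  have gh: "\<And>x. x \<in> topspace X \<Longrightarrow> g (h x) = x" using inj by (simp add: g_def)
  have tY: "topspace Y = h ` topspace X"
    unfolding Y_def topspace_pullback_topology using gh by auto
  have c1: "continuous_map Y X g"
    using continuous_map_pullback[OF continuous_map_id, of "h ` topspace X" g] by (simp add: Y_def)
  have "continuous_map X X (g \<circ> h)"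
    by (rule continuous_map_eq[OF continuous_map_id]) (simp add: gh)
  then have c2: "continuous_map X Y h"
    unfolding Y_def by (rule continuous_map_pullback') auto
  have "homeomorphic_maps X Y h g"
    unfolding homeomorphic_maps_def using c1 c2 gh tY by auto
  then show ?thesis using that homeomorphic_map_maps by blast
qed

lemma ccc_image:
  assumes "ccc_space X" "continuous_map X Y f" "f ` topspace X = topspace Y"
  shows "ccc_space Y"
  unfolding ccc_space_def
proof (intro allI impI)
  fix \<V> assume V: "(\<forall>U\<in>\<V>. openin Y U \<and> U \<noteq> {}) \<and> disjoint \<V>"
  define \<W> where "\<W> = (\<lambda>U. {x \<in> topspace X. f x \<in> U}) ` \<V>"
  have ne: "{x \<in> topspace X. f x \<in> U} \<noteq> {}" if UV: "U \<in> \<V>" for U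
  proof -
    have oU: "openin Y U" "U \<noteq> {}" using V UV by auto
    then obtain y where y: "y \<in> U" by blast
    then have "y \<in> topspace Y" using oU(1) openin_subset by blast
    then have "y \<in> f ` topspace X" using assms(3) by simp
    then obtain x where "x \<in> topspace X" "f x = y" by (rule imageE) simp
    then show ?thesis using y by blast
  qed
  have inj: "inj_on (\<lambda>U. {x \<in> topspace X. f x \<in> U}) \<V>"
  proof (rule inj_onI)
    fix U U' assume U: "U \<in> \<V>" "U' \<in> \<V>" and eq: "{x \<in> topspace X. f x \<in> U} = {x \<in> topspace X. f x \<in> U'}"
    show "U = U'"
    proof (rule ccontr)
      assume "U \<noteq> U'"
      then have dj: "disjnt U U'" using V U by (meson pairwiseD)
      obtain x where x: "x \<in> {x \<in> topspace X. f x \<in> U}" using ne[OF U(1)] by blast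
      then have "x \<in> {x \<in> topspace X. f x \<in> U'}" using eq by simp
      then show False using x dj by (auto simp: disjnt_def)
    qed
  qed
  have opn: "\<forall>U\<in>\<W>. openin X U \<and> U \<noteq> {}"
    unfolding \<W>_def using V ne assms(2) by (auto simp: continuous_map_def)
  have dis: "disjoint \<W>"
  proof (rule pairwiseI)
    fix A B assume "A \<in> \<W>" "B \<in> \<W>" "A \<noteq> B"
    then obtain U U' where UU: "U \<in> \<V>" "U' \<in> \<V>" "A = {x \<in> topspace X. f x \<in> U}" "B = {x \<in> topspace X. f x \<in> U'}"
      unfolding \<W>_def by blast
    then have "U \<noteq> U'" using \<open>A \<noteq> B\<close> by blast
    then have "disjnt U U'" using V UU by (meson pairwiseD)
    then show "disjnt A B" using UU by (auto simp: disjnt_def)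
  qed
  have "countable \<W>"
    using assms(1) opn dis unfolding ccc_space_def by blast
  then show "countable \<V>" unfolding \<W>_def using inj countable_image_inj_on by blast
qed



lemma (in Metric_space) compact_second_countable:
  assumes "compact_space mtopology"
  shows "second_countable mtopology"
proof -
  have "\<exists>F. finite F \<and> F \<subseteq> M \<and> M \<subseteq> (\<Union>x\<in>F. mball x (1/Suc n))" for n
  proof -
    have "\<exists>\<F>. finite \<F> \<and> \<F> \<subseteq> (\<lambda>x. mball x (1/Suc n)) ` M \<and> M \<subseteq> \<Union>\<F>"
      using assms unfolding compact_space_alt
      by (elim allE[of _ "(\<lambda>x. mball x (1/Suc n)) ` M"]) force
    then obtain \<F> where "finite \<F>" "\<F> \<subseteq> (\<lambda>x. mball x (1/Suc n)) ` M" "M \<subseteq> \<Union>\<F>" by blast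
    then show ?thesis by (metis finite_subset_image)
  qed
  then obtain F where F: "\<And>n. finite (F n) \<and> F n \<subseteq> M \<and> M \<subseteq> (\<Union>x\<in>F n. mball x (1/Suc n))"
    by metis
  define \<B> where "\<B> = (\<Union>n. (\<lambda>x. mball x (1/Suc n)) ` F n)"
  have "countable ((\<lambda>x. mball x (1/Suc n)) ` F n)" for n
    using F[of n] by (simp add: countable_finite)
  then have "countable \<B>" unfolding \<B>_def by (simp add: countable_UN)
  moreover have "\<forall>V\<in>\<B>. openin mtopology V" unfolding \<B>_def by blast
  moreover have "\<exists>V\<in>\<B>. x \<in> V \<and> V \<subseteq> U" if Ux: "openin mtopology U" "x \<in> U" for U x
  proof -
    obtain r where r: "r > 0" "mball x r \<subseteq> U" using Ux openin_mtopology by blast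
    obtain n where n: "2 / Suc n < r"
    proof -
      obtain n where "2 / r < real n" using reals_Archimedean2 by blast
      then have "2 / Suc n < r" using r(1)
        by (smt (verit, best) divide_less_eq of_nat_Suc of_nat_0_le_iff mult.commute pos_divide_less_eq)
      then show ?thesis using that by blast
    qed
    have xM: "x \<in> M" using Ux openin_mtopology by blast
    then obtain y where y: "y \<in> F n" "x \<in> mball y (1/Suc n)" using F[of n] by blast
    have "mball y (1/Suc n) \<subseteq> mball x r"
    proof
      fix z assume "z \<in> mball y (1/Suc n)"
      then have "d y z < 1/Suc n" "z \<in> M" "y \<in> M" by auto
      moreover have "d x y < 1/Suc n" using y by (auto simp: commute)
      ultimately have "d x z < 2 / Suc n" using triangle[of x y z] xM by simp
      then show "z \<in> mball x r" using n xM \<open>z \<in> M\<close> by simp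
    qed
    then show ?thesis using y r unfolding \<B>_def by blast
  qed
  ultimately show ?thesis unfolding second_countable_def by blast
qed

lemma compact_metrizable_second_countable:
  assumes "metrizable_space X" "compact_space X"
  shows "second_countable X"
  using assms Metric_space.compact_second_countable unfolding metrizable_space_def by metis



lemma second_countable_image:
  assumes X: "compact_space X" "second_countable X" and M: "Hausdorff_space M"
    and g: "continuous_map X M g" "g ` topspace X = topspace M"
  shows "second_countable M"
proof -
  obtain \<B> where B: "countable \<B>" "\<forall>V\<in>\<B>. openin X V"
     "\<And>U x. openin X U \<Longrightarrow> x \<in> U \<Longrightarrow> \<exists>V\<in>\<B>. x \<in> V \<and> V \<subseteq> U"
    using X(2) unfolding second_countable_def by metis
  have cm: "closed_map X M g" using continuous_imp_closed_map X(1) M g(1) by blast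
  define \<C> where "\<C> = (\<lambda>F. topspace M - g ` (topspace X - \<Union>F)) ` {F. finite F \<and> F \<subseteq> \<B>}"
  have "countable \<C>" unfolding \<C>_def using countable_Collect_finite_subset[OF B(1)] by blast
  moreover have "\<forall>V\<in>\<C>. openin M V"
  proof
    fix V assume "V \<in> \<C>"
    then obtain F where F: "F \<subseteq> \<B>" "V = topspace M - g ` (topspace X - \<Union>F)" unfolding \<C>_def by blast
    have "openin X (\<Union>F)" using F B(2) by blast
    then have "closedin X (topspace X - \<Union>F)" by blast
    then have "closedin M (g ` (topspace X - \<Union>F))" using cm closed_map_def by blast
    then show "openin M V" using F by blast
  qed
  moreover have "\<exists>V\<in>\<C>. m \<in> V \<and> V \<subseteq> W" if W: "openin M W" "m \<in> W" for W m
  proof -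
    have mM: "m \<in> topspace M" using W openin_subset by blast
    define \<Phi> where "\<Phi> = {x \<in> topspace X. g x \<in> {m}}"
    have "closedin X \<Phi>" unfolding \<Phi>_def
      using closedin_continuous_map_preimage[OF g(1) closedin_Hausdorff_singleton[OF M mM]] .
    then have cp: "compactin X \<Phi>" using X(1) closedin_compact_space by blast
    define G where "G = {x \<in> topspace X. g x \<in> W}"
    have "openin X G" unfolding G_def using openin_continuous_map_preimage[OF g(1) W(1)] .
    have "\<Phi> \<subseteq> \<Union>{V\<in>\<B>. V \<subseteq> G}"
    proof
      fix x assume "x \<in> \<Phi>"
      then have "x \<in> G" unfolding \<Phi>_def G_def using W by auto
      then show "x \<in> \<Union>{V\<in>\<B>. V \<subseteq> G}" using B(3)[OF \<open>openin X G\<close>] by blast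
    qed
    then obtain F where F: "finite F" "F \<subseteq> {V\<in>\<B>. V \<subseteq> G}" "\<Phi> \<subseteq> \<Union>F"
      using cp B(2) unfolding compactin_def by (metis (no_types, lifting) mem_Collect_eq)
    define V where "V = topspace M - g ` (topspace X - \<Union>F)"
    have "V \<in> \<C>" unfolding \<C>_def V_def using F by blast
    moreover have "m \<in> V"
    proof -
      have "m \<notin> g ` (topspace X - \<Union>F)"
      proof
        assume "m \<in> g ` (topspace X - \<Union>F)"
        then obtain x where x: "x \<in> topspace X" "x \<notin> \<Union>F" "m = g x" by blast
        then have "x \<in> \<Phi>" unfolding \<Phi>_def by simp
        then show False using F(3) x(2) by blast
      qed
      then show ?thesis unfolding V_def using mM by blast
    qed
    moreover have "V \<subseteq> W"
    proof
      fix y assume yV: "y \<in> V"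
      then have "y \<in> topspace M" unfolding V_def by blast
      then obtain x where x0: "x \<in> topspace X" "g x = y" using g(2) by (metis imageE)
      have "x \<in> \<Union>F"
      proof (rule ccontr)
        assume "x \<notin> \<Union>F"
        then have "y \<in> g ` (topspace X - \<Union>F)" using x0 by blast
        then show False using yV unfolding V_def by blast
      qed
      note x = x0 this
      then have "x \<in> G" using F(2) by blast
      then show "y \<in> W" using x G_def by blast
    qed
    ultimately show ?thesis by blast
  qed
  ultimately show ?thesis unfolding second_countable_def by blast
qed



lemma compact_Hausdorff_second_countable_metrizable:
  assumes X: "compact_space X" "Hausdorff_space X" "second_countable X"
  shows "metrizable_space X"
proof -
  obtain \<B> where B: "countable \<B>" "\<forall>V\<in>\<B>. openin X V"
     "\<And>U x. openin X U \<Longrightarrow> x \<in> U \<Longrightarrow> \<exists>V\<in>\<B>. x \<in> V \<and> V \<subseteq> U"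
    using X(3) unfolding second_countable_def by metis
  have nor: "normal_space X" using compact_Hausdorff_or_regular_imp_normal_space X by blast
  have reg: "regular_space X" using compact_Hausdorff_imp_regular_space X by blast
  define P where "P = {(B,C). B \<in> \<B> \<and> C \<in> \<B> \<and> X closure_of B \<subseteq> C}"
  have cP: "countable P" unfolding P_def
    by (rule countable_subset[of _ "\<B> \<times> \<B>"]) (use B(1) in auto)
  have "\<exists>f. continuous_map X (top_of_set {0..1::real}) f \<and> f ` (X closure_of fst p) \<subseteq> {0} \<and> f ` (topspace X - snd p) \<subseteq> {1}"
    if pP: "p \<in> P" for p
  proof -
    obtain B C where p: "p = (B,C)" "B \<in> \<B>" "C \<in> \<B>" "X closure_of B \<subseteq> C" using pP P_def by auto
    have "closedin X (topspace X - C)" using B(2) p by blast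
    moreover have "disjnt (X closure_of B) (topspace X - C)" using p by (auto simp: disjnt_def)
    ultimately obtain f where "continuous_map X (top_of_set {0..1::real}) f" "f ` (X closure_of B) \<subseteq> {0}" "f ` (topspace X - C) \<subseteq> {1}"
      using Urysohn_lemma[OF nor closedin_closure_of, of "topspace X - C" B 0 1] by auto
    then show ?thesis using p by auto
  qed
  then obtain f where f: "\<And>p. p \<in> P \<Longrightarrow> continuous_map X (top_of_set {0..1::real}) (f p) \<and>
      f p ` (X closure_of fst p) \<subseteq> {0} \<and> f p ` (topspace X - snd p) \<subseteq> {1}"
    by metis
  define e where "e = (\<lambda>x. \<lambda>p\<in>P. f p x)"
  have ce: "continuous_map X (product_topology (\<lambda>_. euclideanreal) P) e"
    unfolding continuous_map_componentwise e_def
    using f by (auto simp: continuous_map_in_subtopology)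
  have inj: "inj_on e (topspace X)"
  proof (rule inj_onI, rule ccontr)
    fix x y assume xy: "x \<in> topspace X" "y \<in> topspace X" "e x = e y" "x \<noteq> y"
    have "openin X (topspace X - {y})" using closedin_Hausdorff_singleton[OF X(2) xy(2)] by blast
    then obtain C where C: "C \<in> \<B>" "x \<in> C" "C \<subseteq> topspace X - {y}" using B(3) xy by blast
    have "closedin X (topspace X - C)" using B(2) C by blast
    then obtain V where V: "openin X V" "x \<in> V" "disjnt (topspace X - C) (X closure_of V)"
      using reg xy C unfolding regular_space by blast
    obtain B0 where B0: "B0 \<in> \<B>" "x \<in> B0" "B0 \<subseteq> V" using B(3)[OF V(1,2)] by blast
    have "X closure_of B0 \<subseteq> C"
    proof -
      have "X closure_of B0 \<subseteq> X closure_of V" using B0 closure_of_mono by blast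
      moreover have "X closure_of V \<subseteq> topspace X" by (simp add: closure_of_subset_topspace)
      ultimately show ?thesis using V(3) by (auto simp: disjnt_def)
    qed
    then have p: "(B0, C) \<in> P" using P_def B0 C by auto
    have "B0 \<subseteq> topspace X" using B(2) B0(1) openin_subset by blast
    then have "x \<in> X closure_of B0" using closure_of_subset[of B0 X] B0(2) by blast
    then have "f (B0,C) x = 0" using f[OF p] by auto
    moreover have "y \<in> topspace X - C" using xy C by blast
    then have "f (B0,C) y = 1" using f[OF p] by auto
    moreover have "f (B0,C) x = f (B0,C) y" using xy(3) p unfolding e_def by (metis restrict_apply')
    ultimately show False by simp
  qed
  have H: "Hausdorff_space (product_topology (\<lambda>_. euclideanreal) P)"
    by (simp add: Hausdorff_space_product_topology)
  have "embedding_map X (product_topology (\<lambda>_. euclideanreal) P) e"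
    using continuous_imp_embedding_map[OF ce X(1) H inj] .
  then have hs: "X homeomorphic_space subtopology (product_topology (\<lambda>_. euclideanreal) P) (e ` topspace X)"
    by (rule embedding_map_imp_homeomorphic_space)
  have "metrizable_space (product_topology (\<lambda>_. euclideanreal) P)"
    unfolding metrizable_space_product_topology
    using cP by (auto intro: countable_subset metrizable_space_euclidean)
  then show ?thesis using hs homeomorphic_metrizable_space metrizable_space_subtopology by blast
qed

lemma metrizable_image:
  assumes X: "compact_space X" "metrizable_space X" and M: "Hausdorff_space M"
    and g: "continuous_map X M g" "g ` topspace X = topspace M"
  shows "metrizable_space M"
proof -
  have "second_countable X" using compact_metrizable_second_countable X by blast
  then have "second_countable M" using second_countable_image X(1) M g by blast
  moreover have "compact_space M" using X(1) g by (metis compact_space_def image_compactin)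
  ultimately show ?thesis using compact_Hausdorff_second_countable_metrizable M by blast
qed

lemma hedgehog_not_metrizable:
  assumes L: "Hausdorff_space L" and z: "z \<in> topspace L"
    and nb: "\<And>W. openin L W \<Longrightarrow> z \<in> W \<Longrightarrow> finite {i\<in>I. \<not> Sp i \<subseteq> W}"
    and unc: "uncountable I" and ne: "\<And>i. i \<in> I \<Longrightarrow> Sp i \<noteq> {}"
    and zn: "\<And>i. i \<in> I \<Longrightarrow> z \<notin> Sp i" and sub: "\<And>i. i \<in> I \<Longrightarrow> Sp i \<subseteq> topspace L"
  shows "\<not> metrizable_space L"
proof
  assume "metrizable_space L"
  then have "first_countable L" by (rule metrizable_imp_first_countable)
  then obtain \<B> where B: "countable \<B>" "\<forall>V\<in>\<B>. openin L V"
    "\<And>U. openin L U \<Longrightarrow> z \<in> U \<Longrightarrow> \<exists>V\<in>\<B>. z \<in> V \<and> V \<subseteq> U"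
    using z unfolding first_countable_def by metis
  define J where "J = (\<Union>V\<in>{V\<in>\<B>. z \<in> V}. {i\<in>I. \<not> Sp i \<subseteq> V})"
  have "countable J" unfolding J_def using B(1,2) nb
    by (intro countable_UN) (auto intro: countable_finite)
  then obtain i where i: "i \<in> I" "i \<notin> J" using unc
    by (metis countable_subset subsetI)
  then obtain x where x: "x \<in> Sp i" using ne by blast
  have "x \<noteq> z" using x zn i by blast
  have "x \<in> topspace L" using x sub i by blast
  have "openin L (topspace L - {x})" using closedin_Hausdorff_singleton[OF L \<open>x \<in> topspace L\<close>] by blast
  then obtain V where V: "V \<in> \<B>" "z \<in> V" "V \<subseteq> topspace L - {x}" using B(3) z \<open>x \<noteq> z\<close> by blast
  have "Sp i \<subseteq> V" using i V unfolding J_def by blast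
  then show False using V x by blast
qed

lemma hedgehog_images_metrizable:
  assumes L: "compact_space L" "Hausdorff_space L"
    and z: "z \<in> topspace L"
    and Oo: "\<And>i. i \<in> I \<Longrightarrow> openin L (Sp i)"
    and Od: "\<And>i j. i \<in> I \<Longrightarrow> j \<in> I \<Longrightarrow> i \<noteq> j \<Longrightarrow> Sp i \<inter> Sp j = {}"
    and Oc: "topspace L - {z} \<subseteq> (\<Union>i\<in>I. Sp i)"
    and zn: "\<And>i. i \<in> I \<Longrightarrow> z \<notin> Sp i"
    and metr: "\<And>E. E \<subseteq> I \<Longrightarrow> countable E \<Longrightarrow> compact_space (subtopology L (insert z (\<Union>i\<in>E. Sp i))) \<Longrightarrow> metrizable_space (subtopology L (insert z (\<Union>i\<in>E. Sp i)))"
    and M: "Hausdorff_space M" "ccc_space M"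
    and g: "continuous_map L M g" "g ` topspace L = topspace M"
  shows "metrizable_space M"
proof -
  have cm: "closed_map L M g" using continuous_imp_closed_map L(1) M(1) g(1) by blast
  define V where "V = (\<lambda>E. topspace M - g ` (topspace L - (\<Union>i\<in>E. Sp i)))"
  have Vo: "openin M (V E)" if "E \<subseteq> I" for E
  proof -
    have "openin L (\<Union>i\<in>E. Sp i)" using Oo that by blast
    then have "closedin L (topspace L - (\<Union>i\<in>E. Sp i))" by blast
    then have "closedin M (g ` (topspace L - (\<Union>i\<in>E. Sp i)))" using cm closed_map_def by blast
    then show ?thesis unfolding V_def by blast
  qed
  have Vi: "m \<in> V E \<longleftrightarrow> m \<in> topspace M \<and> (\<forall>x\<in>topspace L. g x = m \<longrightarrow> x \<in> (\<Union>i\<in>E. Sp i))" for m E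
    unfolding V_def by blast
  define \<G> where "\<G> = {P. openin M P \<and> P \<noteq> {} \<and> (\<exists>E\<subseteq>I. countable E \<and> P \<subseteq> V E)}"
  define \<AA> where "\<AA> = {\<P>. \<P> \<subseteq> \<G> \<and> disjoint \<P>}"
  have "\<forall>C\<in>chains \<AA>. \<Union>C \<in> \<AA>"
  proof
    fix C assume C: "C \<in> chains \<AA>"
    then have C1: "C \<subseteq> \<AA>" and C2: "\<And>A B. A \<in> C \<Longrightarrow> B \<in> C \<Longrightarrow> A \<subseteq> B \<or> B \<subseteq> A"
      unfolding chains_def chain_subset_def by auto
    have "\<Union>C \<subseteq> \<G>" using C1 unfolding \<AA>_def by blast
    moreover have "disjoint (\<Union>C)"
    proof (rule pairwiseI)
      fix P Q assume "P \<in> \<Union>C" "Q \<in> \<Union>C" "P \<noteq> Q"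
      then obtain A B where AB: "A \<in> C" "B \<in> C" "P \<in> A" "Q \<in> B" by blast
      show "disjnt P Q"
      proof (cases "A \<subseteq> B")
        case True
        have "disjoint B" using AB C1 unfolding \<AA>_def by blast
        then show ?thesis using True AB \<open>P \<noteq> Q\<close> by (meson pairwiseD subsetD)
      next
        case False
        then have "B \<subseteq> A" using C2 AB by blast
        have "disjoint A" using AB C1 unfolding \<AA>_def by blast
        then show ?thesis using \<open>B \<subseteq> A\<close> AB \<open>P \<noteq> Q\<close> by (meson pairwiseD subsetD)
      qed
    qed
    ultimately show "\<Union>C \<in> \<AA>" unfolding \<AA>_def by blast
  qed
  then have "\<exists>M\<in>\<AA>. \<forall>X\<in>\<AA>. M \<subseteq> X \<longrightarrow> X = M" by (rule Zorn_Lemma)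
  then obtain \<P> where P: "\<P> \<in> \<AA>" and Pmax0: "\<forall>X\<in>\<AA>. \<P> \<subseteq> X \<longrightarrow> X = \<P>"
    by (elim bexE)
  have Pmax: "\<And>X. X \<in> \<AA> \<Longrightarrow> \<P> \<subseteq> X \<Longrightarrow> X = \<P>" using Pmax0 by blast
  have PG: "\<P> \<subseteq> \<G>" and Pd: "disjoint \<P>" using P unfolding \<AA>_def by auto
  have "countable \<P>" using M(2) PG Pd unfolding ccc_space_def \<G>_def by blast
  have "\<forall>P\<in>\<P>. \<exists>E. E \<subseteq> I \<and> countable E \<and> P \<subseteq> V E" using PG unfolding \<G>_def by blast
  then obtain Ef where Ef: "\<And>P. P \<in> \<P> \<Longrightarrow> Ef P \<subseteq> I \<and> countable (Ef P) \<and> P \<subseteq> V (Ef P)" by metis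
  define E where "E = (\<Union>P\<in>\<P>. Ef P)"
  have EI: "E \<subseteq> I" and cE: "countable E" unfolding E_def using Ef \<open>countable \<P>\<close> by auto
  define Y where "Y = insert z (\<Union>i\<in>E. Sp i)"
  have YL: "Y \<subseteq> topspace L" unfolding Y_def using z Oo EI openin_subset by blast
  have covered: "m \<in> g ` Y" if mM: "m \<in> topspace M" for m
  proof (cases "m = g z")
    case True then show ?thesis unfolding Y_def by blast
  next
    case False
    define \<Phi> where "\<Phi> = {x \<in> topspace L. g x \<in> {m}}"
    have "closedin L \<Phi>" unfolding \<Phi>_def
      using closedin_continuous_map_preimage[OF g(1) closedin_Hausdorff_singleton[OF M(1) mM]] .
    then have cp: "compactin L \<Phi>" using L(1) closedin_compact_space by blast
    have "\<Phi> \<subseteq> \<Union>(Sp ` I)" using Oc False unfolding \<Phi>_def by blast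
    then obtain \<F> where F: "finite \<F>" "\<F> \<subseteq> Sp ` I" "\<Phi> \<subseteq> \<Union>\<F>"
      using cp Oo unfolding compactin_def by (metis (no_types, lifting) imageE)
    then obtain Fi where Fi: "finite Fi" "Fi \<subseteq> I" "\<F> = Sp ` Fi" by (metis finite_subset_image)
    define A where "A = Fi - E"
    have "\<exists>x\<in>\<Phi>. x \<notin> (\<Union>i\<in>A. Sp i)"
    proof (rule ccontr)
      assume "\<not> ?thesis"
      then have mV: "m \<in> V A" using Vi mM unfolding \<Phi>_def by blast
      have AI: "A \<subseteq> I" using Fi A_def by blast
      have VG: "V A \<in> \<G>" unfolding \<G>_def using Vo[OF AI] mV AI Fi(1) A_def
        by (auto intro!: exI[of _ A] countable_finite)
      have "\<exists>P\<in>\<P>. V A \<inter> P \<noteq> {}"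
      proof (rule ccontr)
        assume no: "\<not> (\<exists>P\<in>\<P>. V A \<inter> P \<noteq> {})"
        then have notin: "V A \<notin> \<P>" using mV by blast
        have "insert (V A) \<P> \<in> \<AA>"
          unfolding \<AA>_def using PG VG Pd no by (auto simp: pairwise_insert disjnt_def Int_commute)
        then have "insert (V A) \<P> = \<P>" using Pmax by blast
        then show False using notin by blast
      qed
      then obtain P m' where Pm: "P \<in> \<P>" "m' \<in> V A" "m' \<in> P" by blast
      then have "m' \<in> topspace M" using Vi by blast
      then obtain x where x: "x \<in> topspace L" "g x = m'" using g(2) by (metis imageE)
      have "x \<in> (\<Union>i\<in>A. Sp i)" using Pm(2) x Vi by blast
      then obtain i where i: "i \<in> A" "x \<in> Sp i" by blast
      have "m' \<in> V (Ef P)" using Ef Pm by blast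
      then have "x \<in> (\<Union>i\<in>Ef P. Sp i)" using x Vi by blast
      then obtain j where j: "j \<in> Ef P" "x \<in> Sp j" by blast
      have "j \<in> E" using j Pm unfolding E_def by blast
      then have "i \<noteq> j" using i A_def by blast
      moreover have "i \<in> I" "j \<in> I" using i j AI EI \<open>j \<in> E\<close> by auto
      ultimately show False using Od i j by blast
    qed
    then obtain x where x: "x \<in> \<Phi>" "x \<notin> (\<Union>i\<in>A. Sp i)" by blast
    then obtain i where "i \<in> Fi" "x \<in> Sp i" using F Fi by blast
    then have "i \<in> E" using x A_def by blast
    then have "x \<in> Y" using \<open>x \<in> Sp i\<close> unfolding Y_def by blast
    then show ?thesis using x \<Phi>_def by blast
  qed
  have gY: "g ` Y = topspace M" using covered YL g(2) by blast
  have Yeq: "Y = topspace L - (\<Union>i\<in>I - E. Sp i)"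
  proof
    show "Y \<subseteq> topspace L - (\<Union>i\<in>I - E. Sp i)"
    proof
      fix y assume y: "y \<in> Y"
      have "y \<notin> Sp i" if "i \<in> I - E" for i
      proof
        assume "y \<in> Sp i"
        then have "y \<noteq> z" using zn that by blast
        then obtain j where "j \<in> E" "y \<in> Sp j" using y Y_def by blast
        then show False using Od[of i j] that EI \<open>y \<in> Sp i\<close> by blast
      qed
      then show "y \<in> topspace L - (\<Union>i\<in>I - E. Sp i)" using y YL by blast
    qed
    show "topspace L - (\<Union>i\<in>I - E. Sp i) \<subseteq> Y"
      using Oc unfolding Y_def by blast
  qed
  have oU: "openin L (\<Union>i\<in>I - E. Sp i)" using Oo by (intro openin_Union) auto
  have "closedin L Y" unfolding Yeq by (rule closedin_diff[OF closedin_topspace oU])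
  then have cY: "compact_space (subtopology L Y)"
    using L(1) closedin_compact_space compact_space_subtopology by blast
  have mY: "metrizable_space (subtopology L Y)" unfolding Y_def using metr EI cE cY unfolding Y_def by blast
  have cg: "continuous_map (subtopology L Y) M g" using g(1) by (simp add: continuous_map_from_subtopology)
  show ?thesis
    using metrizable_image[OF cY mY M(1) cg] gY YL by (simp add: Int_absorb1)
qed



lemma inj_into_metrizable:
  assumes "compact_space X" "continuous_map X Y f" "metrizable_space Y" "inj_on f (topspace X)"
  shows "metrizable_space X"
proof -
  have "embedding_map X Y f"
    using continuous_imp_embedding_map assms metrizable_imp_Hausdorff_space by blast
  then have "X homeomorphic_space subtopology Y (f ` topspace X)"
    by (rule embedding_map_imp_homeomorphic_space)
  then show ?thesis using assms(3) homeomorphic_metrizable_space metrizable_space_subtopology by blast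
qed

lemma nonccc_hedgehog:
  fixes K :: "'a topology"
  assumes K: "compact_space K" "Hausdorff_space K" and nc: "\<not> ccc_space K"
  obtains L0 :: "('a set \<Rightarrow> real) topology" and F z and Sp :: "'a set \<Rightarrow> ('a set \<Rightarrow> real) set" and I :: "'a set set" where
    "continuous_map K L0 F" "F ` topspace K = topspace L0"
    "compact_space L0" "Hausdorff_space L0" "z \<in> topspace L0"
    "\<And>i. i \<in> I \<Longrightarrow> openin L0 (Sp i)"
    "\<And>i j. i \<in> I \<Longrightarrow> j \<in> I \<Longrightarrow> i \<noteq> j \<Longrightarrow> Sp i \<inter> Sp j = {}"
    "topspace L0 - {z} \<subseteq> (\<Union>i\<in>I. Sp i)"
    "\<And>i. i \<in> I \<Longrightarrow> z \<notin> Sp i"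
    "\<And>E. E \<subseteq> I \<Longrightarrow> countable E \<Longrightarrow> compact_space (subtopology L0 (insert z (\<Union>i\<in>E. Sp i))) \<Longrightarrow> metrizable_space (subtopology L0 (insert z (\<Union>i\<in>E. Sp i)))"
    "\<And>W. openin L0 W \<Longrightarrow> z \<in> W \<Longrightarrow> finite {i\<in>I. \<not> Sp i \<subseteq> W}"
    "uncountable I" "\<And>i. i \<in> I \<Longrightarrow> Sp i \<noteq> {}"
proof -
  obtain \<U> where U: "\<And>U. U \<in> \<U> \<Longrightarrow> openin K U \<and> U \<noteq> {}" "disjoint \<U>" "uncountable \<U>"
    using nc unfolding ccc_space_def by blast
  have nor: "normal_space K" using compact_Hausdorff_or_regular_imp_normal_space K by blast
  have "\<exists>f p. continuous_map K (top_of_set {0..1::real}) f \<and> f ` (topspace K - U) \<subseteq> {0} \<and> p \<in> U \<and> f p = 1"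
    if UU: "U \<in> \<U>" for U
  proof -
    obtain p where p: "p \<in> U" using U(1)[OF UU] by blast
    have pK: "p \<in> topspace K" using p U(1)[OF UU] openin_subset by blast
    have "closedin K (topspace K - U)" using U(1)[OF UU] by blast
    moreover have "closedin K {p}" using closedin_Hausdorff_singleton[OF K(2) pK] .
    moreover have "disjnt (topspace K - U) {p}" using p by (auto simp: disjnt_def)
    ultimately obtain f where "continuous_map K (top_of_set {0..1::real}) f" "f ` (topspace K - U) \<subseteq> {0}" "f ` {p} \<subseteq> {1}"
      using Urysohn_lemma[OF nor, of "topspace K - U" "{p}" 0 1] by auto
    then show ?thesis using p by auto
  qed
  then obtain f p where fp: "\<And>U. U \<in> \<U> \<Longrightarrow> continuous_map K (top_of_set {0..1::real}) (f U) \<and> f U ` (topspace K - U) \<subseteq> {0} \<and> p U \<in> U \<and> f U (p U) = 1"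
    by metis
  have f0: "f U x = 0" if "U \<in> \<U>" "x \<in> topspace K" "x \<notin> U" for U x
    using fp[OF that(1)] that by auto
  have fc: "continuous_map K euclideanreal (f U)" if "U \<in> \<U>" for U
    using fp[OF that] by (simp add: continuous_map_in_subtopology)
  have fnz: "x \<in> U" if "U \<in> \<U>" "x \<in> topspace K" "f U x \<noteq> 0" for U x
    using f0 that by blast
  have disj: "U = V" if "U \<in> \<U>" "V \<in> \<U>" "x \<in> U" "x \<in> V" for U V x
    using U(2) that unfolding pairwise_def disjnt_def by blast
  define P where "P = product_topology (\<lambda>_. euclideanreal) \<U>"
  define F where "F = (\<lambda>x. \<lambda>U\<in>\<U>. f U x)"
  define L0 where "L0 = subtopology P (F ` topspace K)"
  have cF: "continuous_map K P F"
    unfolding P_def F_def continuous_map_componentwise using fc by auto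
  have tL0: "topspace L0 = F ` topspace K"
    unfolding L0_def using cF by (auto simp: continuous_map_def)
  have cF2: "continuous_map K L0 F" unfolding L0_def using cF by (simp add: continuous_map_in_subtopology)
  have HP: "Hausdorff_space P" unfolding P_def by (simp add: Hausdorff_space_product_topology)
  have cL0: "compact_space L0"
    using cF2 tL0 K(1) by (metis compact_space_def image_compactin)
  have HL0: "Hausdorff_space L0" unfolding L0_def using HP by (simp add: Hausdorff_space_subtopology)
  have "\<exists>x0 \<in> topspace K. x0 \<notin> \<Union>\<U>"
  proof (rule ccontr)
    assume "\<not> ?thesis"
    then have "topspace K \<subseteq> \<Union>\<U>" by blast
    then obtain \<F> where F: "finite \<F>" "\<F> \<subseteq> \<U>" "topspace K \<subseteq> \<Union>\<F>"
      using K(1) U(1) unfolding compact_space_alt by meson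
    have "\<not> \<U> \<subseteq> \<F>" using U(3) F(1) countable_finite finite_subset by blast
    then obtain U where "U \<in> \<U> - \<F>" by blast
    then have "p U \<in> topspace K" using fp U(1) openin_subset by blast
    then obtain V where "V \<in> \<F>" "p U \<in> V" using F by blast
    then show False using disj[of U V "p U"] \<open>U \<in> \<U> - \<F>\<close> fp F by blast
  qed
  then obtain x0 where x0: "x0 \<in> topspace K" "x0 \<notin> \<Union>\<U>" by blast
  define z where "z = F x0"
  have zval: "z = (\<lambda>U\<in>\<U>. 0)" unfolding z_def F_def using f0 x0 by auto
  have zL: "z \<in> topspace L0" unfolding z_def tL0 using x0(1) by (rule imageI)
  define Sp where "Sp = (\<lambda>U. {y \<in> topspace L0. y U \<in> - {0::real}})"
  have So: "openin L0 (Sp U)" if "U \<in> \<U>" for U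
  proof -
    have "continuous_map P euclideanreal (\<lambda>y. y U)"
      unfolding P_def using continuous_map_product_projection[OF that] .
    then have "continuous_map L0 euclideanreal (\<lambda>y. y U)"
      unfolding L0_def by (rule continuous_map_from_subtopology)
    then show ?thesis unfolding Sp_def
      using openin_continuous_map_preimage[of L0 euclideanreal _ "- {0}"] by auto
  qed
  have Fsupp: "F x V = 0" if "x \<in> U" "U \<in> \<U>" "V \<in> \<U>" "V \<noteq> U" "x \<in> topspace K" for x U V
    using f0[of V x] disj[of U V x] that unfolding F_def by auto
  have Sd: "Sp U \<inter> Sp V = {}" if "U \<in> \<U>" "V \<in> \<U>" "U \<noteq> V" for U V
  proof -
    { fix y assume "y \<in> Sp U" "y \<in> Sp V"
      then obtain x where x: "x \<in> topspace K" "y = F x" "F x U \<noteq> 0" "F x V \<noteq> 0" unfolding Sp_def using tL0 by auto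
      then have "x \<in> U" "x \<in> V" using fnz that unfolding F_def by auto
      then have False using disj that by blast }
    then show ?thesis by blast
  qed
  have Sc: "topspace L0 - {z} \<subseteq> (\<Union>U\<in>\<U>. Sp U)"
  proof
    fix y assume y: "y \<in> topspace L0 - {z}"
    then obtain x where x: "x \<in> topspace K" "y = F x" using tL0 by auto
    have "\<exists>U\<in>\<U>. y U \<noteq> 0"
    proof (rule ccontr)
      assume "\<not> ?thesis"
      then have "y = z" unfolding zval x(2) F_def by (auto simp: restrict_def)
      then show False using y by blast
    qed
    then show "y \<in> (\<Union>U\<in>\<U>. Sp U)" using y unfolding Sp_def by auto
  qed
  have zn: "z \<notin> Sp U" if "U \<in> \<U>" for U unfolding Sp_def zval using that by auto
  have Sne: "Sp U \<noteq> {}" if "U \<in> \<U>" for U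
  proof -
    have "p U \<in> topspace K" using fp U(1) that openin_subset by blast
    moreover have "F (p U) U = 1" using fp that unfolding F_def by auto
    ultimately have "F (p U) \<in> Sp U" unfolding Sp_def using tL0 by auto
    then show ?thesis by blast
  qed
  have Sform: "\<exists>x. x \<in> topspace K \<and> x \<in> U \<and> y = F x" if yU: "y \<in> Sp U" "U \<in> \<U>" for y U
  proof -
    have "y \<in> topspace L0" "y U \<noteq> 0" using yU(1) unfolding Sp_def by auto
    then obtain x where x: "x \<in> topspace K" "y = F x" "F x U \<noteq> 0" using tL0 by auto
    then have "x \<in> U" using fnz[of U x] yU unfolding F_def by auto
    then show ?thesis using x by blast
  qed
  have nb: "finite {U\<in>\<U>. \<not> Sp U \<subseteq> W}" if W: "openin L0 W" "z \<in> W" for W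
  proof -
    obtain W' where W': "openin P W'" "W = W' \<inter> F ` topspace K" using W unfolding L0_def openin_subtopology by blast
    obtain X where X: "z \<in> (\<Pi>\<^sub>E i\<in>\<U>. X i)" "finite {i. X i \<noteq> topspace euclideanreal}" "(\<Pi>\<^sub>E i\<in>\<U>. X i) \<subseteq> W'"
      using product_topology_open_contains_basis[of "\<lambda>_. euclideanreal" \<U> W' z] W' W unfolding P_def by blast
    have "{U\<in>\<U>. \<not> Sp U \<subseteq> W} \<subseteq> {i. X i \<noteq> topspace euclideanreal}"
    proof
      fix U assume UU: "U \<in> {U\<in>\<U>. \<not> Sp U \<subseteq> W}"
      then have U: "U \<in> \<U>" "\<not> Sp U \<subseteq> W" by auto
      show "U \<in> {i. X i \<noteq> topspace euclideanreal}"
      proof (rule ccontr)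
      assume "U \<notin> {i. X i \<noteq> topspace euclideanreal}"
      then have XU: "X U = topspace euclideanreal" by simp
      obtain y where y: "y \<in> Sp U" "y \<notin> W" using U(2) by blast
      then obtain x where x: "x \<in> topspace K" "x \<in> U" "y = F x" using Sform U by blast
      have "y \<in> (\<Pi>\<^sub>E i\<in>\<U>. X i)"
      proof (unfold PiE_iff, intro conjI ballI)
        fix V assume V: "V \<in> \<U>"
        show "y V \<in> X V"
        proof (cases "V = U")
          case True then show ?thesis using XU by simp
        next
          case False
          then have "y V = 0" using Fsupp[of x U V] x U V by simp
          moreover have "z V \<in> X V" using X(1) V by (auto simp: PiE_iff)
          ultimately show ?thesis using zval V by simp
        qed
      next
        show "y \<in> extensional \<U>" using x unfolding F_def by simp
      qed
      then have "y \<in> W" using X(3) W' x by blast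
      then show False using y by blast
      qed
    qed
    then show ?thesis using X(2) finite_subset by blast
  qed
  have metr: "metrizable_space (subtopology L0 (insert z (\<Union>i\<in>E. Sp i)))"
    if E: "E \<subseteq> \<U>" "countable E" "compact_space (subtopology L0 (insert z (\<Union>i\<in>E. Sp i)))" for E
  proof -
    define Y where "Y = insert z (\<Union>i\<in>E. Sp i)"
    define r where "r = (\<lambda>y::'a set \<Rightarrow> real. restrict y E)"
    have cr: "continuous_map (subtopology L0 Y) (product_topology (\<lambda>_. euclideanreal) E) r"
      unfolding continuous_map_componentwise r_def
    proof (intro conjI ballI)
      show "(\<lambda>y. restrict y E) ` topspace (subtopology L0 Y) \<subseteq> extensional E" by auto
      fix k assume "k \<in> E"
      then have "continuous_map L0 euclideanreal (\<lambda>y. y k)"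
        unfolding L0_def P_def using E
        by (intro continuous_map_from_subtopology continuous_map_product_projection) blast
      then have "continuous_map (subtopology L0 Y) euclideanreal (\<lambda>y. y k)"
        by (rule continuous_map_from_subtopology)
      then show "continuous_map (subtopology L0 Y) euclideanreal (\<lambda>x. restrict x E k)"
        using \<open>k \<in> E\<close> by simp
    qed
    have mP: "metrizable_space (product_topology (\<lambda>_. euclideanreal) E)"
      unfolding metrizable_space_product_topology
      using E(2) by (auto intro: countable_subset metrizable_space_euclidean)
    have vanish: "y V = 0" if yV: "y \<in> Y" "V \<in> \<U> - E" for y V
    proof (cases "y = z")
      case True then show ?thesis using zval yV by simp
    next
      case False
      then obtain U where U: "U \<in> E" "y \<in> Sp U" using yV Y_def by blast
      then obtain x where "x \<in> topspace K" "x \<in> U" "y = F x" using Sform E(1) by blast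
      then show ?thesis using Fsupp[of x U V] U yV E(1) by auto
    qed
    have ext: "y \<in> extensional \<U>" if yY: "y \<in> Y" for y
    proof (cases "y = z")
      case True then show ?thesis using zval by simp
    next
      case False
      then obtain U where U: "U \<in> E" "y \<in> Sp U" using yY Y_def by blast
      then have "y \<in> topspace L0" unfolding Sp_def by blast
      then show ?thesis using tL0 unfolding F_def by auto
    qed
    have inj: "inj_on r (topspace (subtopology L0 Y))"
    proof (rule inj_onI)
      fix y y' assume yy: "y \<in> topspace (subtopology L0 Y)" "y' \<in> topspace (subtopology L0 Y)" "r y = r y'"
      then have yY: "y \<in> Y" "y' \<in> Y" by auto
      show "y = y'"
      proof (rule extensionalityI[OF ext[OF yY(1)] ext[OF yY(2)]])
        fix V assume V: "V \<in> \<U>"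
        show "y V = y' V"
        proof (cases "V \<in> E")
          case True then show ?thesis using yy(3) unfolding r_def by (metis restrict_apply')
        next
          case False
          then have "V \<in> \<U> - E" using V by blast
          then show ?thesis using vanish[OF yY(1)] vanish[OF yY(2)] by simp
        qed
      qed
    qed
    show ?thesis using inj_into_metrizable[OF _ cr mP inj] E(3) unfolding Y_def by blast
  qed
  show ?thesis
    by (rule that[OF cF2 tL0[symmetric] cL0 HL0 zL So Sd Sc zn metr nb U(3) Sne])
qed


theorem corollary3p3:
  fixes K :: "'a topology"
  shows "CCC K \<longleftrightarrow> CCC_perp_perp K"
proof
  assume "CCC K"
  then have Kc: "compact_space K" "Hausdorff_space K" "ccc_space K"
    unfolding CCC_def compact_Hausdorff_def by auto
  show "CCC_perp_perp K"
    unfolding CCC_perp_perp_def perp_def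
  proof (intro conjI allI impI)
    show "compact_Hausdorff K" using Kc compact_Hausdorff_def by blast
    fix L :: "'a set topology" and f :: "'a \<Rightarrow> 'a set"
    assume A: "continuous_map K L f \<and> f ` topspace K = topspace L \<and> CCC_perp L"
    then have Lp: "perp (CCC :: 'a set set topology \<Rightarrow> bool) L" unfolding CCC_perp_def by blast
    then have Lc: "compact_space L" "Hausdorff_space L" unfolding perp_def compact_Hausdorff_def by auto
    have cccL: "ccc_space L" using ccc_image[OF Kc(3)] A by blast
    have "inj_on (\<lambda>x::'a set. {x}) (topspace L)" by (auto simp: inj_on_def)
    then obtain M :: "'a set set topology" where h: "homeomorphic_map L M (\<lambda>x. {x})"
      by (rule transport_topology)
    have hs: "L homeomorphic_space M" using homeomorphic_map_imp_homeomorphic_space h by blast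
    have hc: "continuous_map L M (\<lambda>x. {x})" using homeomorphic_imp_continuous_map[OF h] .
    have hsu: "(\<lambda>x. {x}) ` topspace L = topspace M" using homeomorphic_imp_surjective_map[OF h] .
    have "ccc_space M" using ccc_image[OF cccL hc hsu] .
    moreover have "compact_space M" using Lc(1) homeomorphic_compact_space[OF hs] by blast
    moreover have "Hausdorff_space M" using Lc(2) homeomorphic_Hausdorff_space[OF hs] by blast
    ultimately have "CCC M" unfolding CCC_def compact_Hausdorff_def by blast
    then have "metrizable_space M" using Lp hc hsu unfolding perp_def by blast
    then show "metrizable_space L" using homeomorphic_metrizable_space[OF hs] by blast
  qed
next
  assume H: "CCC_perp_perp K"
  then have Kc: "compact_space K" "Hausdorff_space K"
    unfolding CCC_perp_perp_def perp_def compact_Hausdorff_def by auto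
  have Hm: "metrizable_space L" if "continuous_map K L f" "f ` topspace K = topspace L" "CCC_perp L"
    for L :: "'a set topology" and f
    using H that unfolding CCC_perp_perp_def perp_def by blast
  show "CCC K"
  proof (rule ccontr)
    assume "\<not> CCC K"
    then have nc: "\<not> ccc_space K" using Kc unfolding CCC_def compact_Hausdorff_def by blast
    show False
    proof (rule nonccc_hedgehog[OF Kc nc])
      fix L0 :: "('a set \<Rightarrow> real) topology" and F z and Sp :: "'a set \<Rightarrow> ('a set \<Rightarrow> real) set" and I :: "'a set set"
      assume h1: "continuous_map K L0 F" and h2: "F ` topspace K = topspace L0"
        and cL0: "compact_space L0" and HL0: "Hausdorff_space L0" and zL: "z \<in> topspace L0"
        and So: "\<And>i. i \<in> I \<Longrightarrow> openin L0 (Sp i)"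
        and Sd: "\<And>i j. i \<in> I \<Longrightarrow> j \<in> I \<Longrightarrow> i \<noteq> j \<Longrightarrow> Sp i \<inter> Sp j = {}"
        and Sc: "topspace L0 - {z} \<subseteq> (\<Union>i\<in>I. Sp i)"
        and zn: "\<And>i. i \<in> I \<Longrightarrow> z \<notin> Sp i"
        and metr: "\<And>E. E \<subseteq> I \<Longrightarrow> countable E \<Longrightarrow> compact_space (subtopology L0 (insert z (\<Union>i\<in>E. Sp i))) \<Longrightarrow> metrizable_space (subtopology L0 (insert z (\<Union>i\<in>E. Sp i)))"
        and nb: "\<And>W. openin L0 W \<Longrightarrow> z \<in> W \<Longrightarrow> finite {i\<in>I. \<not> Sp i \<subseteq> W}"
        and unc: "uncountable I" and ne: "\<And>i. i \<in> I \<Longrightarrow> Sp i \<noteq> {}"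
      define \<iota> where "\<iota> = (\<lambda>y. {x \<in> topspace K. F x = y})"
      have "inj_on \<iota> (topspace L0)"
      proof (rule inj_onI)
        fix y y' assume y: "y \<in> topspace L0" "y' \<in> topspace L0" "\<iota> y = \<iota> y'"
        then have eq: "{x \<in> topspace K. F x = y} = {x \<in> topspace K. F x = y'}" unfolding \<iota>_def by simp
        obtain x where x: "x \<in> topspace K" "F x = y" using y(1) h2 by (metis imageE)
        then have "x \<in> {x \<in> topspace K. F x = y'}" using eq by blast
        then show "y = y'" using x by simp
      qed
      then obtain L :: "'a set topology" where hL: "homeomorphic_map L0 L \<iota>"
        by (rule transport_topology)
      have hs: "L0 homeomorphic_space L" using homeomorphic_map_imp_homeomorphic_space hL by blast
      have hc: "continuous_map L0 L \<iota>" using homeomorphic_imp_continuous_map[OF hL] .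
      have hsu: "\<iota> ` topspace L0 = topspace L" using homeomorphic_imp_surjective_map[OF hL] .
      have c1: "continuous_map K L (\<iota> \<circ> F)" using continuous_map_compose[OF h1 hc] .
      have s1: "(\<iota> \<circ> F) ` topspace K = topspace L" using h2 hsu by (metis image_comp)
      have "CCC_perp L"
        unfolding CCC_perp_def perp_def
      proof (intro conjI allI impI)
        show "compact_Hausdorff L" unfolding compact_Hausdorff_def
          using cL0 HL0 homeomorphic_compact_space[OF hs] homeomorphic_Hausdorff_space[OF hs] by blast
        fix M :: "'a set set topology" and g
        assume g: "continuous_map L M g \<and> g ` topspace L = topspace M \<and> CCC M"
        then have MH: "Hausdorff_space M" "ccc_space M" unfolding CCC_def compact_Hausdorff_def by auto
        have gc: "continuous_map L0 M (g \<circ> \<iota>)" using continuous_map_compose[OF hc] g by blast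
        have gs: "(g \<circ> \<iota>) ` topspace L0 = topspace M" using g hsu by (metis image_comp)
        show "metrizable_space M"
          by (rule hedgehog_images_metrizable[OF cL0 HL0 zL So Sd Sc zn metr MH gc gs]) auto
      qed
      then have "metrizable_space L" using Hm c1 s1 by blast
      then have "metrizable_space L0" using homeomorphic_metrizable_space[OF hs] by blast
      moreover have "\<not> metrizable_space L0"
        using hedgehog_not_metrizable[OF HL0 zL nb unc ne zn] So openin_subset by blast
      ultimately show False by blast
    qed
  qed
qed

end
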